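(* $|\mathsf{Agg}|=2^{\mathfrak{c}}$, where $\mathfrak{c}=2^{\aleph_0}$.
   Context: An $n$-ary aggregation function on $[0,1]$ is a function $f\colon[0,1]^n\to[0,1]$ nondecreasing in each coordinate with $f(0,\dots,0)=0$ and $f(1,\dots,1)=1$; $\mathsf{Agg}$ is the set of all aggregation functions of all finite arities $n\in\mathbb{N}$. *)

theory Defs
  imports Complex_Main "HOL-Library.Equipollence"
begin

definition unit_cube :: "nat \<Rightarrow> real list set" where
  "unit_cube n = {xs. length xs = n \<and> (\<forall>i<n. 0 \<le> xs ! i \<and> xs ! i \<le> 1)}"

text \<open>An n-ary aggregation function: a function on [0,1]^n into [0,1], nondecreasing in
each coordinate, with f(0,...,0)=0 and f(1,...,1)=1. To make the function a genuine
mathematical object with domain [0,1]^n, we require it to be 0 outside the cube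
(extensionality), so that distinct aggregation functions correspond to distinct HOL terms.\<close>
definition is_agg :: "nat \<Rightarrow> (real list \<Rightarrow> real) \<Rightarrow> bool" where
  "is_agg n f \<longleftrightarrow>
     (\<forall>xs. xs \<notin> unit_cube n \<longrightarrow> f xs = 0) \<and>
     (\<forall>xs\<in>unit_cube n. 0 \<le> f xs \<and> f xs \<le> 1) \<and>
     (\<forall>xs\<in>unit_cube n. \<forall>i<n. \<forall>t. xs ! i \<le> t \<and> t \<le> 1 \<longrightarrow> f xs \<le> f (xs[i := t])) \<and>
     f (replicate n 0) = 0 \<and> f (replicate n 1) = 1"

definition Agg :: "(nat \<times> (real list \<Rightarrow> real)) set" where
  "Agg = {(n, f). is_agg n f}"

end

theory Submission
  imports Defs "HOL-Analysis.Analysis"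
begin

definition FS :: "real set \<Rightarrow> real list \<Rightarrow> real" where
  "FS S xs = (if xs \<in> unit_cube 2 then
      (if xs!0 + xs!1 > 1 \<or> (xs!0 + xs!1 = 1 \<and> xs!0 \<in> S) then 1 else 0) else 0)"

lemma FS_agg: "is_agg 2 (FS S)"
proof -
  have cube: "xs[i := t] \<in> unit_cube 2" if "xs \<in> unit_cube 2" "i < 2" "xs!i \<le> t" "t \<le> 1" for xs i t
    using that unfolding unit_cube_def
    by (auto simp: nth_list_update)
  have mono: "FS S xs \<le> FS S (xs[i := t])"
    if "xs \<in> unit_cube 2" "i < 2" "xs!i \<le> t" "t \<le> 1" for xs i t
  proof -
    have c: "xs[i := t] \<in> unit_cube 2" using cube that by blast
    have l: "length xs = 2" using that(1) by (simp add: unit_cube_def)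
    have "i = 0 \<or> i = 1" using that(2) by auto
    then show ?thesis
      using that c l unfolding FS_def by (auto simp: nth_list_update; smt (verit))
  qed
  have r0: "replicate 2 (0::real) \<in> unit_cube 2" "replicate 2 (1::real) \<in> unit_cube 2"
    by (auto simp: unit_cube_def)
  show ?thesis
    unfolding is_agg_def using mono r0
    by (auto simp: FS_def numeral_2_eq_2)
qed

lemma FS_inj:
  assumes "S \<subseteq> {0..1}" "T \<subseteq> {0..1}" "FS S = FS T"
  shows "S = T"
proof -
  have "x \<in> S \<longleftrightarrow> x \<in> T" if "x \<in> {0..1}" for x
  proof -
    have c: "[x, 1 - x] \<in> unit_cube 2" using that
      by (auto simp: unit_cube_def less_2_cases_iff)
    have "FS S [x, 1-x] = FS T [x, 1-x]" using assms(3) by simp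
    then show ?thesis using c by (auto simp: FS_def split: if_splits)
  qed
  then show ?thesis using assms(1,2) by blast
qed

lemma lower: "Pow (Pow (UNIV :: nat set)) \<lesssim> Agg"
proof -
  obtain g where g: "inj_on g (UNIV :: nat set set)" "g \<in> UNIV \<rightarrow> {0..<1::real}"
    using nat_sets_lepoll_reals01 unfolding lepoll_def' by blast
  define h where "h = (\<lambda>T. (2::nat, FS (g ` T)))"
  have "inj_on h (Pow (Pow UNIV))"
  proof (rule inj_onI)
    fix T T' assume "h T = h T'" "T \<in> Pow (Pow UNIV)" "T' \<in> Pow (Pow UNIV)"
    then have "FS (g ` T) = FS (g ` T')" by (simp add: h_def)
    moreover have "g ` T \<subseteq> {0..1}" "g ` T' \<subseteq> {0..1}" using g(2) by (auto simp: Pi_def less_imp_le)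
    ultimately have "g ` T = g ` T'" using FS_inj by blast
    then show "T = T'" using g(1) by (simp add: inj_image_eq_iff)
  qed
  moreover have "h \<in> Pow (Pow UNIV) \<rightarrow> Agg"
    using FS_agg by (auto simp: h_def Agg_def)
  ultimately show ?thesis unfolding lepoll_def' by blast
qed

lemma code_exists: "\<exists>e :: nat \<times> real list \<times> real \<Rightarrow> nat set. inj e"
proof -
  obtain r where r: "inj_on r (UNIV :: real set)" "r \<in> UNIV \<rightarrow> (UNIV :: nat set set)"
    using eqpoll_sym[OF nat_sets_eqpoll_reals] unfolding eqpoll_def bij_betw_def by blast
  define s where "s = (\<lambda>(n::nat, xs::real list, y::real). (\<lambda>k::nat.
     if k = 0 then {n} else if k = 1 then {length xs} else if k = 2 then r y
     else r (xs ! (k - 3))))"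
  define e where "e = (\<lambda>p. {prod_encode (k, m) | k m. m \<in> s p k})"
  have "inj s"
  proof (rule injI)
    fix p q assume eq: "s p = s q"
    obtain n xs y where p: "p = (n, xs, y)" by (cases p) auto
    obtain n' xs' y' where q: "q = (n', xs', y')" by (cases q) auto
    have "s p 0 = s q 0" "s p 1 = s q 1" "s p 2 = s q 2" using eq by auto
    then have 1: "n = n'" "length xs = length xs'" "y = y'"
      using r(1) by (auto simp: s_def p q inj_on_def)
    have "xs ! k = xs' ! k" for k
    proof -
      have "s p (k+3) = s q (k+3)" using eq by simp
      then show ?thesis using r(1) by (auto simp: s_def p q inj_on_def)
    qed
    then have "xs = xs'" using 1 by (simp add: nth_equalityI)
    then show "p = q" using 1 p q by simp
  qed
  moreover have "inj e"
  proof (rule injI)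
    fix p q assume eq: "e p = e q"
    have "s p = s q"
    proof
      fix k show "s p k = s q k"
      proof -
        have "m \<in> s p k \<longleftrightarrow> prod_encode (k, m) \<in> e p" for p m
          by (auto simp: e_def dest: inj_onD[OF inj_prod_encode, simplified])
        then show ?thesis using eq by blast
      qed
    qed
    then show "p = q" using \<open>inj s\<close> by (simp add: inj_eq)
  qed
  then show ?thesis by blast
qed

lemma upper: "Agg \<lesssim> Pow (Pow (UNIV :: nat set))"
proof -
  obtain e :: "nat \<times> real list \<times> real \<Rightarrow> nat set" where e: "inj e"
    using code_exists by blast
  define G where "G = (\<lambda>(n::nat, f::real list \<Rightarrow> real). range (\<lambda>xs. (n, xs, f xs)))"
  have "inj G"
  proof (rule injI)
    fix p q assume eq: "G p = G q"
    obtain n f where p: "p = (n, f)" by (cases p) auto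
    obtain n' f' where q: "q = (n', f')" by (cases q) auto
    have "(n, [], f []) \<in> G q" using eq by (auto simp: G_def p)
    then have "n = n'" by (auto simp: G_def q)
    moreover have "f xs = f' xs" for xs
    proof -
      have "(n, xs, f xs) \<in> G q" using eq by (auto simp: G_def p)
      then show ?thesis by (auto simp: G_def q)
    qed
    ultimately show "p = q" using p q by auto
  qed
  define H where "H = (\<lambda>p. e ` G p)"
  have "inj H"
    using \<open>inj G\<close> e unfolding H_def inj_def by (metis inj_image_eq_iff e)
  then have "inj_on H Agg" using inj_on_subset by blast
  moreover have "H \<in> Agg \<rightarrow> Pow (Pow UNIV)" by auto
  ultimately show ?thesis unfolding lepoll_def' by blast
qed

theorem lemma6:
  shows "Agg \<approx> Pow (Pow (UNIV :: nat set))"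
  using lepoll_antisym[OF upper lower] .

end
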